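(* Let $G$ be a graph of order $n\ge2$. The following are equivalent: (1) $G\cong K_{n-r}\sqcup rK_1$ for some $r$ with $n-r\ge2$; (2) $\operatorname{zir}(G)=n-1$; (3) $\operatorname{Z}(G)=n-1$; (4) $\overline{\operatorname{Z}}(G)=n-1$; (5) $\operatorname{ZIR}(G)=n-1$.
   Context: $\sqcup$ denotes disjoint union and $rK_1$ is $r$ isolated vertices. Zero forcing: a blue vertex $u$ changes a white vertex $w$ to blue if $w$ is the only white neighbor of $u$; $B$ is a zero forcing set if from blue set $B$ eventually all vertices are blue; $\operatorname{Z}(G)$ is the minimum size of a zero forcing set and $\overline{\operatorname{Z}}(G)$ the maximum size of an inclusion-minimal zero forcing set. A nonempty $F\subseteq V(G)$ is a fort if every $v\notin F$ has $|N(v)\cap F|\ne1$. A private fort of $x\in S$ relative to $S$ is a fort $F$ with $S\cap F=\{x\}$; $S$ is a ZIr-set if every element of $S$ has a private fort. $\operatorname{zir}(G)$ / $\operatorname{ZIR}(G)$ are the minimum / maximum cardinality of an inclusion-maximal ZIr-set. *)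

theory Defs
  imports Main
begin

definition graph :: "'a set \<Rightarrow> ('a \<Rightarrow> 'a \<Rightarrow> bool) \<Rightarrow> bool" where
  "graph V E \<longleftrightarrow> finite V \<and> (\<forall>u v. E u v \<longrightarrow> u \<in> V \<and> v \<in> V)
     \<and> (\<forall>u v. E u v \<longrightarrow> E v u) \<and> (\<forall>u. \<not> E u u)"

definition nbhd :: "('a \<Rightarrow> 'a \<Rightarrow> bool) \<Rightarrow> 'a \<Rightarrow> 'a set" where
  "nbhd E v = {u. E v u}"

definition graph_iso :: "'a set \<Rightarrow> ('a \<Rightarrow> 'a \<Rightarrow> bool) \<Rightarrow> 'b set \<Rightarrow> ('b \<Rightarrow> 'b \<Rightarrow> bool) \<Rightarrow> bool" where
  "graph_iso V E W F \<longleftrightarrow> (\<exists>f. bij_betw f V W \<and> (\<forall>u\<in>V. \<forall>v\<in>V. E u v \<longleftrightarrow> F (f u) (f v)))"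

text \<open>The graph K_{n-r} disjoint union r K_1 on vertex set {0..<n}: vertices below n-r form a clique,
  the remaining r vertices are isolated.\<close>
definition clique_plus_isolated_V :: "nat \<Rightarrow> nat set" where
  "clique_plus_isolated_V n = {0..<n}"

definition clique_plus_isolated_E :: "nat \<Rightarrow> nat \<Rightarrow> nat \<Rightarrow> nat \<Rightarrow> bool" where
  "clique_plus_isolated_E n r i j \<longleftrightarrow> i < n - r \<and> j < n - r \<and> i \<noteq> j"

definition force_step :: "'a set \<Rightarrow> ('a \<Rightarrow> 'a \<Rightarrow> bool) \<Rightarrow> 'a set \<Rightarrow> 'a set \<Rightarrow> bool" where
  "force_step V E S S' \<longleftrightarrow> (\<exists>u w. u \<in> S \<and> w \<in> V - S \<and> E u w
      \<and> (\<forall>x \<in> V - S. E u x \<longrightarrow> x = w) \<and> S' = insert w S)"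

definition zero_forcing_set :: "'a set \<Rightarrow> ('a \<Rightarrow> 'a \<Rightarrow> bool) \<Rightarrow> 'a set \<Rightarrow> bool" where
  "zero_forcing_set V E B \<longleftrightarrow> B \<subseteq> V \<and> (force_step V E)\<^sup>*\<^sup>* B V"

definition minimal_zero_forcing_set :: "'a set \<Rightarrow> ('a \<Rightarrow> 'a \<Rightarrow> bool) \<Rightarrow> 'a set \<Rightarrow> bool" where
  "minimal_zero_forcing_set V E B \<longleftrightarrow> zero_forcing_set V E B
     \<and> (\<forall>B'. B' \<subset> B \<longrightarrow> \<not> zero_forcing_set V E B')"

definition Z :: "'a set \<Rightarrow> ('a \<Rightarrow> 'a \<Rightarrow> bool) \<Rightarrow> nat" where
  "Z V E = Min (card ` {B. zero_forcing_set V E B})"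

definition Zbar :: "'a set \<Rightarrow> ('a \<Rightarrow> 'a \<Rightarrow> bool) \<Rightarrow> nat" where
  "Zbar V E = Max (card ` {B. minimal_zero_forcing_set V E B})"

definition fort :: "'a set \<Rightarrow> ('a \<Rightarrow> 'a \<Rightarrow> bool) \<Rightarrow> 'a set \<Rightarrow> bool" where
  "fort V E F \<longleftrightarrow> F \<noteq> {} \<and> F \<subseteq> V \<and> (\<forall>v \<in> V - F. card (nbhd E v \<inter> F) \<noteq> 1)"

definition private_fort :: "'a set \<Rightarrow> ('a \<Rightarrow> 'a \<Rightarrow> bool) \<Rightarrow> 'a set \<Rightarrow> 'a \<Rightarrow> 'a set \<Rightarrow> bool" where
  "private_fort V E S x F \<longleftrightarrow> fort V E F \<and> S \<inter> F = {x}"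

definition ZIr_set :: "'a set \<Rightarrow> ('a \<Rightarrow> 'a \<Rightarrow> bool) \<Rightarrow> 'a set \<Rightarrow> bool" where
  "ZIr_set V E S \<longleftrightarrow> S \<subseteq> V \<and> (\<forall>x \<in> S. \<exists>F. private_fort V E S x F)"

definition maximal_ZIr_set :: "'a set \<Rightarrow> ('a \<Rightarrow> 'a \<Rightarrow> bool) \<Rightarrow> 'a set \<Rightarrow> bool" where
  "maximal_ZIr_set V E S \<longleftrightarrow> ZIr_set V E S \<and> (\<forall>T. S \<subset> T \<longrightarrow> \<not> ZIr_set V E T)"

definition zir :: "'a set \<Rightarrow> ('a \<Rightarrow> 'a \<Rightarrow> bool) \<Rightarrow> nat" where
  "zir V E = Min (card ` {S. maximal_ZIr_set V E S})"

definition ZIR :: "'a set \<Rightarrow> ('a \<Rightarrow> 'a \<Rightarrow> bool) \<Rightarrow> nat" where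
  "ZIR V E = Max (card ` {S. maximal_ZIr_set V E S})"

end

theory Submission
  imports Defs
begin


definition noniso :: "('a \<Rightarrow> 'a \<Rightarrow> bool) \<Rightarrow> 'a \<Rightarrow> bool" where
  "noniso E x \<longleftrightarrow> (\<exists>t. E x t)"

definition cliq :: "('a \<Rightarrow> 'a \<Rightarrow> bool) \<Rightarrow> bool" where
  "cliq E \<longleftrightarrow> (\<forall>x y. noniso E x \<longrightarrow> noniso E y \<longrightarrow> x \<noteq> y \<longrightarrow> E x y)"

definition hasedge :: "('a \<Rightarrow> 'a \<Rightarrow> bool) \<Rightarrow> bool" where
  "hasedge E \<longleftrightarrow> (\<exists>u v. E u v)"

lemma gE:
  assumes "graph V E" "E u v"
  shows "u \<in> V" "v \<in> V" "E v u" "u \<noteq> v"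
  using assms unfolding graph_def by metis+

lemma noniso_V: "graph V E \<Longrightarrow> noniso E x \<Longrightarrow> x \<in> V"
  unfolding noniso_def using gE by metis

lemma ZF_V: "graph V E \<Longrightarrow> zero_forcing_set V E V"
  unfolding zero_forcing_set_def by auto

lemma step_minus1:
  assumes g: "graph V E" and e: "E y w"
  shows "force_step V E (V - {w}) V"
proof -
  have "y \<in> V" "w \<in> V" "y \<noteq> w" using gE[OF g e] by auto
  then show ?thesis unfolding force_step_def
    by (intro exI[of _ y] exI[of _ w]) (auto simp: e)
qed

lemma ZF_minus1:
  assumes g: "graph V E" and e: "E y w"
  shows "zero_forcing_set V E (V - {w})"
  unfolding zero_forcing_set_def using step_minus1[OF g e] by auto

lemma ZF_minus2:
  assumes g: "graph V E" and ab: "a \<noteq> b" "a \<in> V" "b \<in> V"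
    and u: "E u a" "\<not> E u b" "u \<noteq> b" and y: "E y b"
  shows "zero_forcing_set V E (V - {a,b})"
proof -
  have uV: "u \<in> V" "u \<noteq> a" using gE[OF g u(1)] by auto
  have s1: "force_step V E (V - {a,b}) (V - {b})"
  proof -
    have 1: "V - {b} = insert a (V - {a, b})" using ab by auto
    have 2: "\<forall>x \<in> V - (V - {a, b}). E u x \<longrightarrow> x = a" using u by auto
    have 3: "u \<in> V - {a,b}" "a \<in> V - (V - {a,b})" using ab u uV by auto
    show ?thesis unfolding force_step_def using 1 2 3 u by blast
  qed
  have s2: "force_step V E (V - {b}) V" using step_minus1[OF g y] .
  show ?thesis unfolding zero_forcing_set_def
    using s1 s2 by (meson Diff_subset converse_rtranclp_into_rtranclp rtranclp.rtrancl_refl)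
qed

lemma ZF_first:
  assumes "zero_forcing_set V E B" "B \<noteq> V"
  shows "\<exists>u w. u \<in> B \<and> w \<in> V - B \<and> E u w"
proof -
  from assms(1) have "(force_step V E)\<^sup>*\<^sup>* B V" unfolding zero_forcing_set_def by auto
  then show ?thesis
  proof (cases rule: converse_rtranclpE)
    case base then show ?thesis using assms(2) by simp
  next
    case (step S) then show ?thesis unfolding force_step_def by blast
  qed
qed

lemma edgeless_ZF:
  assumes "\<not> hasedge E" "zero_forcing_set V E B"
  shows "B = V"
  using ZF_first[OF assms(2)] assms(1) unfolding hasedge_def by blast

lemma twin:
  assumes g: "graph V E" and wz: "E w z"
    and H: "\<forall>x v. x \<noteq> w \<longrightarrow> noniso E x \<longrightarrow> v \<noteq> x \<longrightarrow> v \<noteq> w \<longrightarrow> (E x v \<longleftrightarrow> E w v)"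
  shows "cliq E"
proof -
  have adj: "E x w" if "x \<noteq> w" "noniso E x" for x
  proof (rule ccontr)
    assume nx: "\<not> E x w"
    have zw: "E z w" "z \<noteq> w" using gE[OF g wz] by auto
    have xz: "x \<noteq> z" using zw nx by auto
    have "E x z" using H zw xz that wz by metis
    have nz: "noniso E z" using zw unfolding noniso_def by auto
    have "E z x \<longleftrightarrow> E w x" using H zw nz xz that by metis
    moreover have "E z x" using gE[OF g \<open>E x z\<close>] by auto
    ultimately have "E w x" by simp
    then show False using gE[OF g] nx by metis
  qed
  show ?thesis unfolding cliq_def
  proof (intro allI impI)
    fix x y assume x: "noniso E x" and y: "noniso E y" and xy: "x \<noteq> y"
    show "E x y"
    proof (cases "x = w")
      case True then show ?thesis using adj[of y] y xy gE[OF g] by metis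
    next
      case False
      show ?thesis
      proof (cases "y = w")
        case True then show ?thesis using adj[of x] x False by simp
      next
        case yw: False
        have "E x y \<longleftrightarrow> E w y" using H False x xy yw by metis
        then show ?thesis using adj[of y] yw y gE[OF g] by metis
      qed
    qed
  qed
qed

lemma lemA:
  assumes g: "graph V E" and nc: "\<not> cliq E" and w: "noniso E w"
  shows "\<exists>z. z \<in> V \<and> z \<noteq> w \<and> zero_forcing_set V E (V - {w,z})"
proof -
  obtain t where wt: "E w t" using w unfolding noniso_def by auto
  have "\<not> (\<forall>x v. x \<noteq> w \<longrightarrow> noniso E x \<longrightarrow> v \<noteq> x \<longrightarrow> v \<noteq> w \<longrightarrow> (E x v \<longleftrightarrow> E w v))"
    using twin[OF g wt] nc by blast
  then obtain x v where xv: "x \<noteq> w" "noniso E x" "v \<noteq> x" "v \<noteq> w" "\<not> (E x v \<longleftrightarrow> E w v)"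
    by blast
  have xV: "x \<in> V" "w \<in> V" using noniso_V[OF g] xv(2) w by auto
  have tw: "E t w" using gE[OF g wt] by auto
  obtain s where xs: "E x s" using xv(2) unfolding noniso_def by auto
  have sx: "E s x" using gE[OF g xs] by auto
  show ?thesis
  proof (cases "E x v")
    case True
    then have "E v x" "\<not> E v w" using xv gE[OF g] by metis+
    then have "zero_forcing_set V E (V - {x,w})"
      using ZF_minus2[OF g _ _ _ _ _ _ tw, of x v] xv xV by auto
    then show ?thesis using xV xv by (intro exI[of _ x]) (auto simp: insert_commute)
  next
    case False
    then have "E v w" "\<not> E v x" using xv gE[OF g] by metis+
    then have "zero_forcing_set V E (V - {w,x})"
      using ZF_minus2[OF g _ _ _ _ _ _ sx, of w v] xv xV by auto
    then show ?thesis using xV xv by (intro exI[of _ x]) auto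
  qed
qed



lemma fort_single_noniso:
  assumes g: "graph V E" and f: "fort V E {x}" and x: "noniso E x"
  shows False
proof -
  obtain t where xt: "E x t" using x unfolding noniso_def by auto
  have "t \<in> V" "t \<noteq> x" "E t x" using gE[OF g xt] by auto
  moreover have "nbhd E t \<inter> {x} = {x}" using \<open>E t x\<close> unfolding nbhd_def by auto
  ultimately have "t \<in> V - {x}" "card (nbhd E t \<inter> {x}) = 1" by auto
  then show False using f unfolding fort_def by blast
qed

lemma lemB:
  assumes g: "graph V E" and he: "hasedge E" and nc: "\<not> cliq E" and c: "c \<in> V"
    and Z: "ZIr_set V E (V - {c})"
  shows False
proof -
  have H: "\<forall>x v. x \<noteq> c \<longrightarrow> noniso E x \<longrightarrow> v \<noteq> x \<longrightarrow> v \<noteq> c \<longrightarrow> (E x v \<longleftrightarrow> E c v)"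
  proof (intro allI impI)
    fix x v assume xc: "x \<noteq> c" and x: "noniso E x" and vx: "v \<noteq> x" and vc: "v \<noteq> c"
    have "x \<in> V - {c}" using noniso_V[OF g x] xc by auto
    then obtain F where F: "fort V E F" "(V - {c}) \<inter> F = {x}"
      using Z unfolding ZIr_set_def private_fort_def by blast
    have FV: "F \<subseteq> V" using F(1) unfolding fort_def by auto
    have Fs: "F \<subseteq> {x,c}" using F(2) FV by auto
    have xF: "x \<in> F" using F(2) by auto
    have cF: "c \<in> F"
    proof (rule ccontr)
      assume "c \<notin> F"
      then have "F = {x}" using Fs xF by auto
      then show False using fort_single_noniso[OF g _ x] F(1) by simp
    qed
    have FF: "F = {x,c}" using Fs xF cF by auto
    show "E x v \<longleftrightarrow> E c v"
    proof (rule ccontr)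
      assume ne: "\<not> (E x v \<longleftrightarrow> E c v)"
      then have vV: "v \<in> V" using gE[OF g] by metis
      have "nbhd E v \<inter> F = {x} \<or> nbhd E v \<inter> F = {c}"
        using ne FF gE[OF g] unfolding nbhd_def by auto
      then have "card (nbhd E v \<inter> F) = 1" by auto
      then show False using F(1) vV vx vc FF unfolding fort_def by auto
    qed
  qed
  show False
  proof (cases "noniso E c")
    case True
    then obtain z where "E c z" unfolding noniso_def by auto
    then show False using twin[OF g _ H] nc by blast
  next
    case False
    obtain u v where uv: "E u v" using he unfolding hasedge_def by auto
    have uc: "u \<noteq> c" using False uv unfolding noniso_def by auto
    have vc: "v \<noteq> c" using False gE[OF g uv] unfolding noniso_def by auto
    have "noniso E u" using uv unfolding noniso_def by auto
    then have "E u v \<longleftrightarrow> E c v" using H uc vc gE[OF g uv] by metis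
    then show False using uv False unfolding noniso_def by auto
  qed
qed

lemma ZIr_V_false:
  assumes g: "graph V E" and e: "E a b" and Z: "ZIr_set V E V"
  shows False
proof -
  have "a \<in> V" using gE[OF g e] by auto
  then obtain F where F: "fort V E F" "V \<inter> F = {a}"
    using Z unfolding ZIr_set_def private_fort_def by blast
  have "F = {a}" using F unfolding fort_def by auto
  moreover have "noniso E a" using e unfolding noniso_def by auto
  ultimately show False using fort_single_noniso[OF g] F by auto
qed

lemma edgeless_ZIr:
  assumes "\<not> hasedge E"
  shows "ZIr_set V E S \<longleftrightarrow> S \<subseteq> V"
proof
  assume "S \<subseteq> V"
  moreover have "fort V E {x}" if "x \<in> V" for x
    using that assms unfolding fort_def hasedge_def nbhd_def by auto
  ultimately show "ZIr_set V E S" unfolding ZIr_set_def private_fort_def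
    by blast
qed (simp add: ZIr_set_def)

lemma Q_ZIr_not:
  assumes g: "graph V E" and he: "hasedge E" and cl: "cliq E" and Z: "ZIr_set V E S"
  shows "\<exists>c. noniso E c \<and> c \<notin> S"
proof (rule ccontr)
  assume "\<not> ?thesis"
  then have all: "\<And>c. noniso E c \<Longrightarrow> c \<in> S" by blast
  obtain a b where ab: "E a b" using he unfolding hasedge_def by auto
  have na: "noniso E a" and nb: "noniso E b" using ab gE[OF g ab] unfolding noniso_def by auto
  obtain F where F: "fort V E F" "S \<inter> F = {a}"
    using Z all[OF na] unfolding ZIr_set_def private_fort_def by blast
  have bF: "b \<notin> F" using F(2) all[OF nb] gE[OF g ab] by auto
  have "nbhd E b \<inter> F = {a}"
  proof
    show "nbhd E b \<inter> F \<subseteq> {a}"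
    proof
      fix y assume "y \<in> nbhd E b \<inter> F"
      then have "E b y" "y \<in> F" unfolding nbhd_def by auto
      then have "y \<in> S" using all unfolding noniso_def using gE[OF g] by metis
      then show "y \<in> {a}" using F(2) \<open>y \<in> F\<close> by auto
    qed
    show "{a} \<subseteq> nbhd E b \<inter> F" using F(2) gE[OF g ab] unfolding nbhd_def by auto
  qed
  then have "card (nbhd E b \<inter> F) = 1" by simp
  moreover have "b \<in> V - F" using bF gE[OF g ab] by auto
  ultimately show False using F(1) unfolding fort_def by blast
qed

lemma Q_ZIr_minus:
  assumes g: "graph V E" and cl: "cliq E" and c: "noniso E c"
  shows "ZIr_set V E (V - {c})"
  unfolding ZIr_set_def private_fort_def
proof (intro conjI ballI)
  fix x assume x: "x \<in> V - {c}"
  have cV: "c \<in> V" using noniso_V[OF g c] .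
  show "\<exists>F. fort V E F \<and> (V - {c}) \<inter> F = {x}"
  proof (cases "noniso E x")
    case True
    have "fort V E {x,c}"
      unfolding fort_def
    proof (intro conjI ballI)
      show "{x,c} \<subseteq> V" using x cV by auto
      fix v assume v: "v \<in> V - {x,c}"
      show "card (nbhd E v \<inter> {x, c}) \<noteq> 1"
      proof (cases "noniso E v")
        case True
        then have "nbhd E v \<inter> {x,c} = {x,c}" using cl \<open>noniso E x\<close> c v
          unfolding cliq_def nbhd_def by auto
        then show ?thesis using x by auto
      next
        case False
        then have "nbhd E v = {}" unfolding noniso_def nbhd_def by auto
        then show ?thesis by simp
      qed
    qed simp
    then show ?thesis using x by (intro exI[of _ "{x,c}"]) auto
  next
    case False
    have "fort V E {x}"
      unfolding fort_def
    proof (intro conjI ballI)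
      fix v assume v: "v \<in> V - {x}"
      have "nbhd E v \<inter> {x} = {}" using False gE(3)[OF g, of v x] unfolding noniso_def nbhd_def by auto
      then show "card (nbhd E v \<inter> {x}) \<noteq> 1" by simp
    qed (use x in auto)
    then show ?thesis using x by (intro exI[of _ "{x}"]) auto
  qed
qed simp



definition Inv :: "'a set \<Rightarrow> ('a \<Rightarrow> 'a \<Rightarrow> bool) \<Rightarrow> 'a set \<Rightarrow> bool" where
  "Inv V E S \<longleftrightarrow> (\<exists>w\<in>V-S. \<not> noniso E w) \<or>
     (\<exists>a b. a \<in> V - S \<and> b \<in> V - S \<and> a \<noteq> b \<and> noniso E a \<and> noniso E b)"

lemma Inv_step:
  assumes g: "graph V E" and cl: "cliq E" and I: "Inv V E S" and st: "force_step V E S T"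
  shows "Inv V E T"
proof -
  obtain u w where uw: "u \<in> S" "w \<in> V - S" "E u w" "\<forall>x \<in> V - S. E u x \<longrightarrow> x = w" "T = insert w S"
    using st unfolding force_step_def by blast
  have nw: "noniso E w" using gE[OF g uw(3)] unfolding noniso_def by auto
  have nu: "noniso E u" using uw(3) unfolding noniso_def by auto
  from I consider (a) w0 where "w0 \<in> V - S" "\<not> noniso E w0"
    | (b) a b where "a \<in> V - S" "b \<in> V - S" "a \<noteq> b" "noniso E a" "noniso E b"
    unfolding Inv_def by blast
  then show ?thesis
  proof cases
    case a
    then have "w0 \<in> V - T" "\<not> noniso E w0" using nw uw(5) by auto
    then show ?thesis unfolding Inv_def by blast
  next
    case b
    note ab = b
    have "u \<noteq> a" "u \<noteq> b" using ab uw(1) by auto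
    then have "E u a" "E u b" using cl nu ab unfolding cliq_def by auto
    then have "a = w" "b = w" using uw(4) ab by auto
    then show ?thesis using ab by simp
  qed
qed

lemma Q_ZF_card:
  assumes g: "graph V E" and cl: "cliq E" and Z: "zero_forcing_set V E B"
  shows "card (V - B) \<le> 1"
proof (rule ccontr)
  assume "\<not> card (V - B) \<le> 1"
  moreover have fin: "finite (V - B)" using g unfolding graph_def by auto
  ultimately obtain a b where ab: "a \<in> V - B" "b \<in> V - B" "a \<noteq> b"
    using card_le_Suc0_iff_eq[OF fin] by auto
  have I0: "Inv V E B"
    unfolding Inv_def using ab by blast
  have R: "(force_step V E)\<^sup>*\<^sup>* B V" using Z unfolding zero_forcing_set_def by auto
  have "Inv V E T" if "(force_step V E)\<^sup>*\<^sup>* B T" for T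
    using that
  proof (induction T rule: rtranclp_induct)
    case base then show ?case using I0 .
  next
    case (step y z) then show ?case using Inv_step[OF g cl] by blast
  qed
  from this[OF R] have "Inv V E V" .
  then show False unfolding Inv_def by auto
qed

lemma fin_cards:
  assumes g: "graph V E" and sub: "\<And>B. P B \<Longrightarrow> B \<subseteq> V"
  shows "finite (card ` {B. P B})"
proof -
  have "{B. P B} \<subseteq> Pow V" using sub by auto
  moreover have "finite V" using g unfolding graph_def by auto
  ultimately show ?thesis by (meson finite_Pow_iff finite_imageI finite_subset)
qed

lemma ex_minimal_ZF:
  assumes g: "graph V E"
  shows "\<exists>B. minimal_zero_forcing_set V E B"
proof -
  obtain B where B: "zero_forcing_set V E B" "\<forall>B'. zero_forcing_set V E B' \<longrightarrow> card B \<le> card B'"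
    using ex_has_least_nat[of "zero_forcing_set V E" V card] ZF_V[OF g] by blast
  have fB: "finite B" using B(1) g unfolding zero_forcing_set_def graph_def
    by (meson finite_subset)
  show ?thesis unfolding minimal_zero_forcing_set_def
    using B fB psubset_card_mono by (metis leD)
qed

lemma ex_maximal_ZIr:
  assumes g: "graph V E"
  shows "\<exists>S. maximal_ZIr_set V E S"
proof -
  have fV: "finite V" using g unfolding graph_def by auto
  have "ZIr_set V E {}" unfolding ZIr_set_def by auto
  then obtain S where S: "ZIr_set V E S" "\<forall>T. ZIr_set V E T \<longrightarrow> card V - card S \<le> card V - card T"
    using ex_has_least_nat[of "ZIr_set V E" "{}" "\<lambda>S. card V - card S"] by blast
  show ?thesis unfolding maximal_ZIr_set_def
  proof (intro exI conjI allI impI)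
    fix T assume ST: "S \<subset> T"
    show "\<not> ZIr_set V E T"
    proof
      assume T: "ZIr_set V E T"
      then have TV: "T \<subseteq> V" unfolding ZIr_set_def by auto
      then have "card S < card T" "card T \<le> card V" using ST fV
        by (auto intro: psubset_card_mono card_mono finite_subset)
      then show False using S(2) T by force
    qed
  qed (use S in auto)
qed

lemma card_n1:
  assumes fV: "finite V" and S: "S \<subseteq> V" "card S = card V - 1" and n: "card V \<ge> 1"
  shows "\<exists>c\<in>V. S = V - {c}"
proof -
  have "card (V - S) = 1" using card_Diff_subset[OF finite_subset[OF S(1) fV] S(1)] S n by simp
  then obtain c where "V - S = {c}" by (rule card_1_singletonE)
  then show ?thesis using S(1) by (intro bexI[of _ c]) auto
qed



lemma iso_to_Q:
  assumes g: "graph V E" and r: "n - r \<ge> 2"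
    and iso: "graph_iso V E (clique_plus_isolated_V n) (clique_plus_isolated_E n r)"
  shows "hasedge E \<and> cliq E"
proof -
  obtain f where f: "bij_betw f V {0..<n}"
    "\<forall>u\<in>V. \<forall>v\<in>V. E u v \<longleftrightarrow> clique_plus_isolated_E n r (f u) (f v)"
    using iso unfolding graph_iso_def clique_plus_isolated_V_def by blast
  have "0 \<in> f ` V" "1 \<in> f ` V" using f(1) r unfolding bij_betw_def by auto
  then obtain u v where uv: "u \<in> V" "v \<in> V" "f u = 0" "f v = 1" by auto
  have he: "hasedge E" using f(2) uv r unfolding hasedge_def clique_plus_isolated_E_def by force
  have lt: "f x < n - r" if nx: "noniso E x" for x
  proof -
    obtain t where "E x t" using nx unfolding noniso_def by auto
    then show ?thesis using f(2) gE[OF g] unfolding clique_plus_isolated_E_def by metis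
  qed
  have "cliq E" unfolding cliq_def
  proof (intro allI impI)
    fix x y assume x: "noniso E x" and y: "noniso E y" and xy: "x \<noteq> y"
    have xV: "x \<in> V" "y \<in> V" using noniso_V[OF g] x y by auto
    have "f x \<noteq> f y" using f(1) xV xy unfolding bij_betw_def inj_on_def by auto
    then show "E x y" using f(2) xV lt[OF x] lt[OF y] unfolding clique_plus_isolated_E_def by auto
  qed
  with he show ?thesis by simp
qed

lemma Q_to_iso:
  assumes g: "graph V E" and n: "card V = n" and he: "hasedge E" and cl: "cliq E"
  shows "\<exists>r. n - r \<ge> 2 \<and> graph_iso V E (clique_plus_isolated_V n) (clique_plus_isolated_E n r)"
proof -
  define C where "C = {x. noniso E x}"
  have fV: "finite V" using g unfolding graph_def by auto
  have CV: "C \<subseteq> V" using noniso_V[OF g] unfolding C_def by auto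
  have fC: "finite C" using finite_subset[OF CV fV] .
  define k where "k = card C"
  obtain a b where ab: "E a b" using he unfolding hasedge_def by auto
  have "a \<in> C" "b \<in> C" "a \<noteq> b" using ab gE[OF g ab] unfolding C_def noniso_def by auto
  then have "card {a,b} \<le> card C" using fC by (intro card_mono) auto
  then have k2: "k \<ge> 2" unfolding k_def using \<open>a \<noteq> b\<close> by simp
  have kn: "k \<le> n" unfolding k_def using card_mono[OF fV CV] n by simp
  obtain g1 where g1: "bij_betw g1 C {0..<k}" using ex_bij_betw_finite_nat[OF fC] unfolding k_def by blast
  have "card (V - C) = card {k..<n}" using card_Diff_subset[OF fC CV] n unfolding k_def by simp
  then obtain h where h: "bij_betw h (V - C) {k..<n}"
    using finite_same_card_bij[of "V - C" "{k..<n}"] fV by blast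
  define f where "f x = (if x \<in> C then g1 x else h x)" for x
  have b1: "bij_betw f C {0..<k}" using g1 by (rule bij_betw_cong[THEN iffD1, rotated]) (simp add: f_def)
  have b2: "bij_betw f (V - C) {k..<n}" using h by (rule bij_betw_cong[THEN iffD1, rotated]) (simp add: f_def)
  have "bij_betw f (C \<union> (V - C)) ({0..<k} \<union> {k..<n})"
    by (rule bij_betw_combine[OF b1 b2]) auto
  moreover have "C \<union> (V - C) = V" using CV by auto
  moreover have "{0..<k} \<union> {k..<n} = {0..<n}" using kn by auto
  ultimately have bf: "bij_betw f V {0..<n}" by simp
  have fC_iff: "f x < k \<longleftrightarrow> x \<in> C" if "x \<in> V" for x
  proof
    assume "x \<in> C" then show "f x < k" using b1 unfolding bij_betw_def by auto
  next
    assume "f x < k"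
    show "x \<in> C"
    proof (rule ccontr)
      assume "x \<notin> C"
      then have "f x \<in> {k..<n}" using b2 that unfolding bij_betw_def by auto
      then show False using \<open>f x < k\<close> by auto
    qed
  qed
  have "graph_iso V E (clique_plus_isolated_V n) (clique_plus_isolated_E n (n - k))"
    unfolding graph_iso_def clique_plus_isolated_V_def
  proof (intro exI[of _ f] conjI ballI bf)
    fix u v assume u: "u \<in> V" and v: "v \<in> V"
    have nk: "n - (n - k) = k" using kn by simp
    show "E u v \<longleftrightarrow> clique_plus_isolated_E n (n - k) (f u) (f v)"
      unfolding clique_plus_isolated_E_def nk
    proof
      assume e: "E u v"
      then have "u \<in> C" "v \<in> C" "u \<noteq> v" using gE[OF g e] unfolding C_def noniso_def by auto
      moreover have "f u \<noteq> f v" using bf u v \<open>u \<noteq> v\<close> unfolding bij_betw_def inj_on_def by auto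
      ultimately show "f u < k \<and> f v < k \<and> f u \<noteq> f v" using fC_iff u v by auto
    next
      assume "f u < k \<and> f v < k \<and> f u \<noteq> f v"
      then have "u \<in> C" "v \<in> C" "u \<noteq> v" using fC_iff u v by auto
      then show "E u v" using cl unfolding cliq_def C_def by auto
    qed
  qed
  then show ?thesis using k2 kn by (intro exI[of _ "n - k"]) auto
qed



lemma Q_vals:
  assumes g: "graph V E" and n: "card V = n" and he: "hasedge E" and cl: "cliq E"
  shows "zir V E = n - 1 \<and> Z V E = n - 1 \<and> Zbar V E = n - 1 \<and> ZIR V E = n - 1"
proof -
  have fV: "finite V" using g unfolding graph_def by auto
  obtain a b where ab: "E a b" using he unfolding hasedge_def by auto
  have na: "noniso E a" using ab unfolding noniso_def by auto
  have aV: "a \<in> V" using noniso_V[OF g na] .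
  have cardm: "card (V - {c}) = n - 1" if "c \<in> V" for c using that n fV by simp
  have maxV: "maximal_ZIr_set V E (V - {c})" if c: "noniso E c" for c
    unfolding maximal_ZIr_set_def
  proof (intro conjI allI impI)
    show "ZIr_set V E (V - {c})" using Q_ZIr_minus[OF g cl c] .
    fix T assume T: "V - {c} \<subset> T"
    show "\<not> ZIr_set V E T"
    proof
      assume ZT: "ZIr_set V E T"
      then have TV: "T \<subseteq> V" unfolding ZIr_set_def by auto
      then have "T = V" using T noniso_V[OF g c] by auto
      then show False using Q_ZIr_not[OF g he cl ZT] noniso_V[OF g] by auto
    qed
  qed
  have maxchar: "\<exists>c. noniso E c \<and> S = V - {c}" if S: "maximal_ZIr_set V E S" for S
  proof -
    have ZS: "ZIr_set V E S" using S unfolding maximal_ZIr_set_def by auto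
    obtain c where c: "noniso E c" "c \<notin> S" using Q_ZIr_not[OF g he cl ZS] by auto
    have "S \<subseteq> V - {c}" using ZS c unfolding ZIr_set_def by auto
    moreover have "\<not> S \<subset> V - {c}" using S Q_ZIr_minus[OF g cl c(1)] unfolding maximal_ZIr_set_def by auto
    ultimately show ?thesis using c by blast
  qed
  have cZIr: "card ` {S. maximal_ZIr_set V E S} = {n - 1}"
  proof
    show "card ` {S. maximal_ZIr_set V E S} \<subseteq> {n - 1}"
      using maxchar cardm noniso_V[OF g] by fastforce
    show "{n - 1} \<subseteq> card ` {S. maximal_ZIr_set V E S}"
      using maxV[OF na] cardm[OF aV] by (metis (mono_tags, lifting) empty_subsetI image_eqI insert_subset mem_Collect_eq)
  qed
  have ZFge: "card B \<ge> n - 1" if B: "zero_forcing_set V E B" for B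
  proof -
    have BV: "B \<subseteq> V" using B unfolding zero_forcing_set_def by auto
    have "card (V - B) \<le> 1" using Q_ZF_card[OF g cl B] .
    then show ?thesis using card_Diff_subset[OF finite_subset[OF BV fV] BV] n by simp
  qed
  have ZFa: "zero_forcing_set V E (V - {a})" using ZF_minus1[OF g gE(3)[OF g ab]] .
  have cZ: "Z V E = n - 1" unfolding Z_def
  proof (rule Min_eqI)
    show "finite (card ` {B. zero_forcing_set V E B})"
      by (rule fin_cards[OF g]) (simp add: zero_forcing_set_def)
    show "\<And>y. y \<in> card ` {B. zero_forcing_set V E B} \<Longrightarrow> n - 1 \<le> y" using ZFge by auto
    show "n - 1 \<in> card ` {B. zero_forcing_set V E B}" using ZFa cardm[OF aV] by force
  qed
  have minchar: "card B = n - 1" if B: "minimal_zero_forcing_set V E B" for B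
  proof -
    have ZB: "zero_forcing_set V E B" and BV: "B \<subseteq> V" using B unfolding minimal_zero_forcing_set_def zero_forcing_set_def by auto
    have "B \<noteq> V" using B ZFa aV unfolding minimal_zero_forcing_set_def by blast
    then have "card B < n" using psubset_card_mono[OF fV] BV n by auto
    then show ?thesis using ZFge[OF ZB] by simp
  qed
  have minA: "minimal_zero_forcing_set V E (V - {a})"
    unfolding minimal_zero_forcing_set_def
  proof (intro conjI allI impI ZFa)
    fix B' assume "B' \<subset> V - {a}"
    then have "card B' < n - 1" using psubset_card_mono[of "V - {a}" B'] fV cardm[OF aV] by auto
    then show "\<not> zero_forcing_set V E B'" using ZFge by force
  qed
  have cZbar: "card ` {B. minimal_zero_forcing_set V E B} = {n - 1}"
    using minchar minA cardm[OF aV] by (auto intro!: image_eqI[of _ card "V - {a}"])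
  show ?thesis unfolding zir_def ZIR_def Zbar_def using cZIr cZ cZbar by simp
qed

lemma notQ_vals:
  assumes g: "graph V E" and n: "card V = n" and n2: "n \<ge> 2" and nQ: "\<not> (hasedge E \<and> cliq E)"
  shows "zir V E \<noteq> n - 1 \<and> Z V E \<noteq> n - 1 \<and> Zbar V E \<noteq> n - 1 \<and> ZIR V E \<noteq> n - 1"
proof -
  have fV: "finite V" using g unfolding graph_def by auto
  have finZ: "finite (card ` {B. zero_forcing_set V E B})"
    by (rule fin_cards[OF g]) (simp add: zero_forcing_set_def)
  have finM: "finite (card ` {B. minimal_zero_forcing_set V E B})"
    by (rule fin_cards[OF g]) (simp add: minimal_zero_forcing_set_def zero_forcing_set_def)
  have finI: "finite (card ` {S. maximal_ZIr_set V E S})"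
    by (rule fin_cards[OF g]) (simp add: maximal_ZIr_set_def ZIr_set_def)
  obtain M where M: "minimal_zero_forcing_set V E M" using ex_minimal_ZF[OF g] by blast
  obtain S0 where S0: "maximal_ZIr_set V E S0" using ex_maximal_ZIr[OF g] by blast
  have neM: "card ` {B. minimal_zero_forcing_set V E B} \<noteq> {}" using M by auto
  have neI: "card ` {S. maximal_ZIr_set V E S} \<noteq> {}" using S0 by auto
  have ZbarIn: "Zbar V E \<in> card ` {B. minimal_zero_forcing_set V E B}"
    unfolding Zbar_def using Max_in[OF finM neM] .
  have zirIn: "zir V E \<in> card ` {S. maximal_ZIr_set V E S}"
    unfolding zir_def using Min_in[OF finI neI] .
  have ZIRIn: "ZIR V E \<in> card ` {S. maximal_ZIr_set V E S}"
    unfolding ZIR_def using Max_in[OF finI neI] .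
  show ?thesis
  proof (cases "hasedge E")
    case False
    have ZFV: "zero_forcing_set V E B \<longleftrightarrow> B = V" for B using edgeless_ZF[OF False] ZF_V[OF g] by blast
    have "{B. zero_forcing_set V E B} = {V}" using ZFV by auto
    then have c1: "Z V E = n" unfolding Z_def using n by simp
    have "minimal_zero_forcing_set V E B \<longleftrightarrow> B = V" for B
      using ZFV unfolding minimal_zero_forcing_set_def by auto
    then have "{B. minimal_zero_forcing_set V E B} = {V}" by auto
    then have c2: "Zbar V E = n" unfolding Zbar_def using n by simp
    have "maximal_ZIr_set V E S \<longleftrightarrow> S = V" for S
      unfolding maximal_ZIr_set_def edgeless_ZIr[OF False] by auto
    then have "{S. maximal_ZIr_set V E S} = {V}" by auto
    then have c3: "zir V E = n" "ZIR V E = n" unfolding zir_def ZIR_def using n by simp_all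
    show ?thesis using c1 c2 c3 n2 by simp
  next
    case he: True
    then have nc: "\<not> cliq E" using nQ by simp
    obtain a b where ab: "E a b" using he unfolding hasedge_def by auto
    have na: "noniso E a" using ab unfolding noniso_def by auto
    have aV: "a \<in> V" using noniso_V[OF g na] .
    obtain z where z: "z \<in> V" "z \<noteq> a" "zero_forcing_set V E (V - {a,z})" using lemA[OF g nc na] by blast
    have "card (V - {a,z}) = n - 2" using z aV n fV by (simp add: card_Diff_subset)
    then have "Z V E \<le> n - 2" unfolding Z_def using finZ z(3) by (metis Min_le image_eqI mem_Collect_eq)
    then have c1: "Z V E \<noteq> n - 1" using n2 by linarith
    have noM: "card B \<noteq> n - 1" if B: "minimal_zero_forcing_set V E B" for B
    proof
      assume cB: "card B = n - 1"
      have ZB: "zero_forcing_set V E B" and BV: "B \<subseteq> V" using B unfolding minimal_zero_forcing_set_def zero_forcing_set_def by auto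
      obtain w where w: "w \<in> V" "B = V - {w}" using card_n1[OF fV BV] cB n n2 by auto
      obtain u w' where uw: "u \<in> B" "w' \<in> V - B" "E u w'" using ZF_first[OF ZB] w by auto
      have "w' = w" using uw w by auto
      then have nw: "noniso E w" using gE(3)[OF g uw(3)] unfolding noniso_def by auto
      obtain z where z: "z \<in> V" "z \<noteq> w" "zero_forcing_set V E (V - {w,z})" using lemA[OF g nc nw] by blast
      have "V - {w,z} \<subset> B" using w z by auto
      then show False using B z(3) unfolding minimal_zero_forcing_set_def by blast
    qed
    have c2: "Zbar V E \<noteq> n - 1" using ZbarIn noM by (metis (mono_tags, lifting) imageE mem_Collect_eq)
    have noI: "card S \<noteq> n - 1" if S: "maximal_ZIr_set V E S" for S
    proof
      assume cS: "card S = n - 1"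
      have ZS: "ZIr_set V E S" and SV: "S \<subseteq> V" using S unfolding maximal_ZIr_set_def ZIr_set_def by auto
      obtain c where c: "c \<in> V" "S = V - {c}" using card_n1[OF fV SV] cS n n2 by auto
      show False using lemB[OF g he nc c(1)] ZS c by simp
    qed
    have c3: "zir V E \<noteq> n - 1" "ZIR V E \<noteq> n - 1" using zirIn ZIRIn noI by (metis (mono_tags, lifting) imageE mem_Collect_eq)+
    show ?thesis using c1 c2 c3 by simp
  qed
qed


theorem proposition5p2:
  fixes V :: "'a set" and E :: "'a \<Rightarrow> 'a \<Rightarrow> bool" and n :: nat
  assumes "graph V E" and "card V = n" and "n \<ge> 2"
  shows "((\<exists>r. n - r \<ge> 2 \<and> graph_iso V E (clique_plus_isolated_V n) (clique_plus_isolated_E n r))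
            \<longleftrightarrow> zir V E = n - 1)
       \<and> ((\<exists>r. n - r \<ge> 2 \<and> graph_iso V E (clique_plus_isolated_V n) (clique_plus_isolated_E n r))
            \<longleftrightarrow> Z V E = n - 1)
       \<and> ((\<exists>r. n - r \<ge> 2 \<and> graph_iso V E (clique_plus_isolated_V n) (clique_plus_isolated_E n r))
            \<longleftrightarrow> Zbar V E = n - 1)
       \<and> ((\<exists>r. n - r \<ge> 2 \<and> graph_iso V E (clique_plus_isolated_V n) (clique_plus_isolated_E n r))
            \<longleftrightarrow> ZIR V E = n - 1)"
proof -
  have eq: "(\<exists>r. n - r \<ge> 2 \<and> graph_iso V E (clique_plus_isolated_V n) (clique_plus_isolated_E n r))
      \<longleftrightarrow> hasedge E \<and> cliq E"
    using iso_to_Q[OF assms(1)] Q_to_iso[OF assms(1,2)] by blast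
  show ?thesis
  proof (cases "hasedge E \<and> cliq E")
    case True
    then show ?thesis using eq Q_vals[OF assms(1,2)] by simp
  next
    case False
    then show ?thesis using eq notQ_vals[OF assms False] by simp
  qed
qed

end
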